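(* Let $a$ be a nonzero even integer, $x\in\mathbb Z\setminus\{0\}$, $\sigma\in\{1,-1\}$, $r\in\mathbb Q\setminus\{0\}$, and suppose that $$\alpha= r\left(\frac{x+\sqrt{x^2+4\sigma}}{2}\right)^{a}$$ is a positive irrational real number. Then there is a constant $C=C(\alpha)>0$ such that $\delta_{\min}^{(\alpha)}(N)\le C/N$ for all integers $N\ge2$. (For example, this applies to $\alpha=(3+\sqrt5)/2$.)
   Context: For irrational $\alpha>0$, the numbers $\alpha m^2+n^2$ with integers $m,n\ge 1$ are pairwise distinct; list them in increasing order as $0<\lambda_1<\lambda_2<\cdots$. For $N\ge 2$ define $\delta_{\min}^{(\alpha)}(N)=\min\{\lambda_{i+1}-\lambda_i : 1\le i<N\}$. *)

theory Defs
  imports "HOL-Analysis.Analysis"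
begin

definition spec_set :: "real \<Rightarrow> real set" where
  "spec_set \<alpha> = {\<alpha> * (of_int m)^2 + (of_int n)^2 | m n :: int. m \<ge> 1 \<and> n \<ge> 1}"

definition spec_lambda :: "real \<Rightarrow> nat \<Rightarrow> real" where
  "spec_lambda \<alpha> i = (THE s. s \<in> spec_set \<alpha> \<and> card {t \<in> spec_set \<alpha>. t < s} = i - 1)"

definition delta_min :: "real \<Rightarrow> nat \<Rightarrow> real" where
  "delta_min \<alpha> N = Min ((\<lambda>i. spec_lambda \<alpha> (i + 1) - spec_lambda \<alpha> i) ` {1..<N})"

end

theory Submission
  imports Defs
begin

lemma spec_set_mem: "m \<ge> 1 \<Longrightarrow> n \<ge> 1 \<Longrightarrow> \<alpha> * (of_int m)^2 + (of_int n)^2 \<in> spec_set \<alpha>"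
  unfolding spec_set_def by blast

lemma below_subset:
  assumes "\<alpha> > 0" "s > 0"
  shows "{t \<in> spec_set \<alpha>. t < s} \<subseteq> (\<lambda>(m,n). \<alpha> * (of_int m)^2 + (of_int n)^2) ` ({1..\<lfloor>sqrt (s/\<alpha>)\<rfloor>} \<times> {1..\<lfloor>sqrt s\<rfloor>})"
proof
  fix t assume "t \<in> {t \<in> spec_set \<alpha>. t < s}"
  then obtain m n :: int where t: "t = \<alpha> * (of_int m)^2 + (of_int n)^2" "m \<ge> 1" "n \<ge> 1" "t < s"
    unfolding spec_set_def by blast
  have "(of_int n)^2 > (0::real)" using t by simp
  hence "\<alpha> * (of_int m)^2 < s" using t by linarith
  hence "(of_int m)^2 < s/\<alpha>" using assms by (simp add: field_simps)
  hence "of_int m < sqrt (s/\<alpha>)" by (rule real_less_rsqrt)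
  hence m: "m \<le> \<lfloor>sqrt (s/\<alpha>)\<rfloor>" by (subst le_floor_iff) (rule less_imp_le)
  have "\<alpha> * (of_int m)^2 > 0" using t assms by simp
  hence "(of_int n)^2 < s" using t by linarith
  hence "of_int n < sqrt s" by (rule real_less_rsqrt)
  hence n: "n \<le> \<lfloor>sqrt s\<rfloor>" by (subst le_floor_iff) (rule less_imp_le)
  show "t \<in> (\<lambda>(m,n). \<alpha> * (of_int m)^2 + (of_int n)^2) ` ({1..\<lfloor>sqrt (s/\<alpha>)\<rfloor>} \<times> {1..\<lfloor>sqrt s\<rfloor>})"
    by (rule image_eqI[where x="(m,n)"]) (use t m n in auto)
qed

lemma below_finite:
  assumes "\<alpha> > 0"
  shows "finite {t \<in> spec_set \<alpha>. t < s}"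
proof (cases "s > 0")
  case True thus ?thesis using finite_subset[OF below_subset[OF assms True]] by blast
next
  case False
  have "\<forall>t\<in>spec_set \<alpha>. t \<ge> 0" unfolding spec_set_def using assms by auto
  hence e: "{t \<in> spec_set \<alpha>. t < s} = {}" using False by force
  show ?thesis by (subst e) (rule finite.emptyI)
qed

lemma below_card:
  assumes "\<alpha> > 0" "s > 0"
  shows "real (card {t \<in> spec_set \<alpha>. t < s}) \<le> s / sqrt \<alpha>"
proof -
  let ?M = "\<lfloor>sqrt (s/\<alpha>)\<rfloor>" and ?N = "\<lfloor>sqrt s\<rfloor>"
  have "card {t \<in> spec_set \<alpha>. t < s} \<le> card ((\<lambda>(m,n). \<alpha> * (of_int m)^2 + (of_int n)^2) ` ({1..?M} \<times> {1..?N}))"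
    by (rule card_mono[OF _ below_subset[OF assms]]) simp
  also have "\<dots> \<le> card ({1..?M} \<times> {1..?N})" by (rule card_image_le) simp
  also have "\<dots> = nat ?M * nat ?N" by (simp add: card_cartesian_product)
  finally have c0: "card {t \<in> spec_set \<alpha>. t < s} \<le> nat ?M * nat ?N" .
  have c: "real (card {t \<in> spec_set \<alpha>. t < s}) \<le> real (nat ?M) * real (nat ?N)"
    unfolding of_nat_mult[symmetric] of_nat_le_iff by (rule c0)
  have fl: "real (nat \<lfloor>y\<rfloor>) \<le> y" if "y \<ge> 0" for y :: real
  proof (cases "\<lfloor>y\<rfloor> \<ge> 0")
    case True
    hence "real (nat \<lfloor>y\<rfloor>) = of_int \<lfloor>y\<rfloor>" by simp
    also have "\<dots> \<le> y" by (rule of_int_floor_le)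
    finally show ?thesis .
  next
    case False thus ?thesis using that by simp
  qed
  have "real (nat ?M) \<le> sqrt (s/\<alpha>)" using assms by (intro fl) simp
  moreover have "real (nat ?N) \<le> sqrt s" using assms by (intro fl) simp
  ultimately have "real (nat ?M) * real (nat ?N) \<le> sqrt (s/\<alpha>) * sqrt s"
    using assms by (intro mult_mono) auto
  also have "\<dots> = (sqrt s * sqrt s) / sqrt \<alpha>" by (simp add: real_sqrt_divide)
  also have "\<dots> = s / sqrt \<alpha>" using assms by simp
  finally show ?thesis using c by linarith
qed

definition cnt :: "real \<Rightarrow> real \<Rightarrow> nat" where
  "cnt \<alpha> s = card {t \<in> spec_set \<alpha>. t < s}"

lemma cnt_mono:
  assumes "\<alpha> > 0" "s \<in> spec_set \<alpha>" "s < s'"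
  shows "cnt \<alpha> s < cnt \<alpha> s'"
proof -
  have "insert s {t \<in> spec_set \<alpha>. t < s} \<subseteq> {t \<in> spec_set \<alpha>. t < s'}" using assms by auto
  hence "card (insert s {t \<in> spec_set \<alpha>. t < s}) \<le> cnt \<alpha> s'"
    unfolding cnt_def by (rule card_mono[OF below_finite[OF assms(1)]])
  moreover have "card (insert s {t \<in> spec_set \<alpha>. t < s}) = Suc (cnt \<alpha> s)"
    unfolding cnt_def by (rule card_insert_disjoint[OF below_finite[OF assms(1)]]) simp
  ultimately show ?thesis by simp
qed

lemma cnt_inj:
  assumes "\<alpha> > 0" "s \<in> spec_set \<alpha>" "s' \<in> spec_set \<alpha>" "cnt \<alpha> s = cnt \<alpha> s'"
  shows "s = s'"
proof (rule ccontr)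
  assume "s \<noteq> s'"
  hence "s < s' \<or> s' < s" by linarith
  thus False using cnt_mono[OF assms(1,2), of s'] cnt_mono[OF assms(1,3), of s] assms(4) by auto
qed

lemma lambda_eq:
  assumes "\<alpha> > 0" "s \<in> spec_set \<alpha>"
  shows "spec_lambda \<alpha> (cnt \<alpha> s + 1) = s"
  unfolding spec_lambda_def
proof (rule the_equality)
  show "s \<in> spec_set \<alpha> \<and> card {t \<in> spec_set \<alpha>. t < s} = cnt \<alpha> s + 1 - 1"
    using assms by (simp add: cnt_def)
  fix s' assume "s' \<in> spec_set \<alpha> \<and> card {t \<in> spec_set \<alpha>. t < s'} = cnt \<alpha> s + 1 - 1"
  thus "s' = s" using cnt_inj[OF assms(1) _ assms(2)] by (simp add: cnt_def)
qed

lemma cnt_surj: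
  assumes "\<alpha> > 0" "s' \<in> spec_set \<alpha>" "j < cnt \<alpha> s'"
  shows "\<exists>s \<in> spec_set \<alpha>. s < s' \<and> cnt \<alpha> s = j"
proof -
  let ?A = "{t \<in> spec_set \<alpha>. t < s'}"
  have fin: "finite ?A" by (rule below_finite[OF assms(1)])
  have inj: "inj_on (cnt \<alpha>) ?A" using cnt_inj[OF assms(1)] by (auto simp: inj_on_def)
  have sub: "cnt \<alpha> ` ?A \<subseteq> {..<cnt \<alpha> s'}" using cnt_mono[OF assms(1)] by auto
  have "card (cnt \<alpha> ` ?A) = card {..<cnt \<alpha> s'}" using card_image[OF inj] by (simp add: cnt_def)
  hence eq: "cnt \<alpha> ` ?A = {..<cnt \<alpha> s'}" using card_subset_eq[OF _ sub] by simp
  have "j \<in> cnt \<alpha> ` ?A" unfolding eq using assms(3) by simp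
  then obtain s where "s \<in> ?A" "cnt \<alpha> s = j" by blast
  thus ?thesis by blast
qed

lemma delta_le:
  assumes "\<alpha> > 0" "s \<in> spec_set \<alpha>" "s' \<in> spec_set \<alpha>" "s < s'" "cnt \<alpha> s' < N"
  shows "delta_min \<alpha> N \<le> s' - s"
proof -
  let ?i = "cnt \<alpha> s + 1"
  have lt: "cnt \<alpha> s < cnt \<alpha> s'" by (rule cnt_mono[OF assms(1,2,4)])
  have li: "spec_lambda \<alpha> ?i = s" by (rule lambda_eq[OF assms(1,2)])
  have "spec_lambda \<alpha> (?i + 1) \<le> s'"
  proof (cases "cnt \<alpha> s + 1 = cnt \<alpha> s'")
    case True thus ?thesis using lambda_eq[OF assms(1,3)] by simp
  next
    case False
    then obtain s'' where "s'' \<in> spec_set \<alpha>" "s'' < s'" "cnt \<alpha> s'' = cnt \<alpha> s + 1"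
      using cnt_surj[OF assms(1,3), of "cnt \<alpha> s + 1"] lt by auto
    thus ?thesis using lambda_eq[OF assms(1), of s''] by simp
  qed
  hence "spec_lambda \<alpha> (?i + 1) - spec_lambda \<alpha> ?i \<le> s' - s" using li by simp
  moreover have "delta_min \<alpha> N \<le> spec_lambda \<alpha> (?i + 1) - spec_lambda \<alpha> ?i"
    unfolding delta_min_def using lt assms(5) by (intro Min_le) auto
  ultimately show ?thesis by simp
qed

lemma delta_mono2:
  assumes "N \<ge> 2"
  shows "delta_min \<alpha> N \<le> delta_min \<alpha> 2"
  unfolding delta_min_def using assms by (intro Min_antimono) auto

fun lucU :: "int \<Rightarrow> nat \<Rightarrow> int" where
  "lucU t 0 = 0" | "lucU t (Suc 0) = 1" | "lucU t (Suc (Suc n)) = t * lucU t (Suc n) - lucU t n"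

fun lucV :: "int \<Rightarrow> nat \<Rightarrow> int" where
  "lucV t 0 = 2" | "lucV t (Suc 0) = t" | "lucV t (Suc (Suc n)) = t * lucV t (Suc n) - lucV t n"

fun Wseq :: "int \<Rightarrow> int \<Rightarrow> nat \<Rightarrow> int" where
  "Wseq x \<sigma> 0 = 2" | "Wseq x \<sigma> (Suc 0) = x" | "Wseq x \<sigma> (Suc (Suc n)) = x * Wseq x \<sigma> (Suc n) + \<sigma> * Wseq x \<sigma> n"

lemma lucU_closed0:
  fixes \<eta> :: real
  assumes "\<eta> \<noteq> 0"
  shows "of_int t = \<eta> + 1/\<eta> \<Longrightarrow> (\<eta> - 1/\<eta>) * of_int (lucU t n) = \<eta>^n - 1/\<eta>^n"
proof (induction t n rule: lucU.induct)
  case (1 t) show ?case by simp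
next
  case (2 t) show ?case by simp
next
  case (3 t n)
  have "(\<eta> - 1/\<eta>) * of_int (lucU t (Suc (Suc n)))
      = of_int t * ((\<eta> - 1/\<eta>) * of_int (lucU t (Suc n))) - (\<eta> - 1/\<eta>) * of_int (lucU t n)"
    by (simp add: algebra_simps)
  also have "\<dots> = (\<eta> + 1/\<eta>) * (\<eta>^Suc n - 1/\<eta>^Suc n) - (\<eta>^n - 1/\<eta>^n)"
    using 3 by simp
  also have "\<dots> = \<eta>^Suc (Suc n) - 1/\<eta>^Suc (Suc n)"
    using assms(1) by (simp add: field_simps)
  finally show ?case .
qed

lemma lucU_closed:
  fixes \<eta> :: real
  assumes "\<eta> \<noteq> 0" "of_int t = \<eta> + 1/\<eta>"
  shows "(\<eta> - 1/\<eta>) * of_int (lucU t n) = \<eta>^n - 1/\<eta>^n"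
  using lucU_closed0[OF assms] .

lemma lucV_closed0:
  fixes \<eta> :: real
  assumes "\<eta> \<noteq> 0"
  shows "of_int t = \<eta> + 1/\<eta> \<Longrightarrow> of_int (lucV t n) = \<eta>^n + 1/\<eta>^n"
proof (induction t n rule: lucV.induct)
  case (1 t) show ?case by simp
next
  case (2 t) thus ?case by simp
next
  case (3 t n)
  have "of_int (lucV t (Suc (Suc n)))
      = of_int t * of_int (lucV t (Suc n)) - of_int (lucV t n)"
    by simp
  also have "\<dots> = (\<eta> + 1/\<eta>) * (\<eta>^Suc n + 1/\<eta>^Suc n) - (\<eta>^n + 1/\<eta>^n)"
    using 3 by simp
  also have "\<dots> = \<eta>^Suc (Suc n) + 1/\<eta>^Suc (Suc n)"
    using assms(1) by (simp add: field_simps)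
  finally show ?case .
qed

lemma lucV_closed:
  fixes \<eta> :: real
  assumes "\<eta> \<noteq> 0" "of_int t = \<eta> + 1/\<eta>"
  shows "of_int (lucV t n) = \<eta>^n + 1/\<eta>^n"
  using lucV_closed0[OF assms] .

lemma Wseq_closed0:
  fixes e f :: real
  shows "e + f = of_int x \<Longrightarrow> e * f = - of_int \<sigma> \<Longrightarrow> of_int (Wseq x \<sigma> n) = e^n + f^n"
proof (induction x \<sigma> n rule: Wseq.induct)
  case (1 x \<sigma>) show ?case by simp
next
  case (2 x \<sigma>) thus ?case by simp
next
  case (3 x \<sigma> n)
  have "of_int (Wseq x \<sigma> (Suc (Suc n))) = of_int x * of_int (Wseq x \<sigma> (Suc n)) + of_int \<sigma> * of_int (Wseq x \<sigma> n)"
    by simp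
  also have "\<dots> = (e + f) * (e^Suc n + f^Suc n) - (e*f) * (e^n + f^n)"
    using 3 by simp
  also have "\<dots> = e^Suc (Suc n) + f^Suc (Suc n)"
    by (simp add: algebra_simps)
  finally show ?case .
qed

lemma idA:
  fixes \<eta> X xin ein D aa bb ww :: real
  assumes "D*aa = X - xin" "D*bb = \<eta>*X - ein*xin" "ww = X + xin" "X*xin = 1" "\<eta>*ein = 1" "D = \<eta> - ein" "D \<noteq> 0"
  shows "\<eta>*aa*ww - bb^2 + aa^2 = -(xin^2)"
proof -
  have "D^2 * (\<eta>*aa*ww - bb^2 + aa^2 + xin^2) = 0" using assms(1-6) by algebra
  thus ?thesis using assms(7) by simp
qed

lemma idB:
  fixes \<eta> X xin ein D aa bb ww :: real
  assumes "D*aa = X - xin" "D*bb = \<eta>*X - ein*xin" "ww = X + xin" "X*xin = 1" "\<eta>*ein = 1" "D = \<eta> - ein" "D \<noteq> 0"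
  shows "ein*(bb^2 - aa^2) - aa*ww = ein * xin^2"
proof -
  have "D^2 * (ein*(bb^2 - aa^2) - aa*ww - ein * xin^2) = 0" using assms(1-6) by algebra
  thus ?thesis using assms(7) by simp
qed

lemma pair_gen:
  fixes \<alpha> Y Z :: real and e1 f1 e2 f2 :: int
  assumes "\<alpha> > 0" "0 < e1" "e1 < f1" "0 < e2" "e2 < f2"
    "of_int f1 \<le> Y" "of_int f2 \<le> Y"
    "g = \<alpha> * of_int e1 * of_int f1 - of_int e2 * of_int f2" "g \<noteq> 0" "\<bar>g\<bar> \<le> Z"
  shows "\<exists>s s'. s \<in> spec_set \<alpha> \<and> s' \<in> spec_set \<alpha> \<and> s < s' \<and> s' \<le> 4*(\<alpha>+1)*Y^2 \<and> s' - s \<le> 4*Z"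
proof -
  define s1 where "s1 = \<alpha>*(of_int (f1+e1))^2 + (of_int (f2-e2))^2"
  define s2 where "s2 = \<alpha>*(of_int (f1-e1))^2 + (of_int (f2+e2))^2"
  have m1: "s1 \<in> spec_set \<alpha>" unfolding s1_def by (rule spec_set_mem) (use assms in auto)
  have m2: "s2 \<in> spec_set \<alpha>" unfolding s2_def by (rule spec_set_mem) (use assms in auto)
  have diff: "s1 - s2 = 4*g" unfolding s1_def s2_def assms(8) by (simp add: algebra_simps power2_eq_square)
  have F1: "0 < (of_int f1::real)" "of_int f1 + of_int e1 \<le> 2 * (of_int f1::real)" "0 < of_int f1 + (of_int e1::real)"
    "0 \<le> of_int f1 - (of_int e1::real)" "of_int f1 - of_int e1 \<le> 2 * (of_int f1::real)"
    using assms by auto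
  have F2: "0 < (of_int f2::real)" "of_int f2 + of_int e2 \<le> 2 * (of_int f2::real)" "0 < of_int f2 + (of_int e2::real)"
    "0 \<le> of_int f2 - (of_int e2::real)" "of_int f2 - of_int e2 \<le> 2 * (of_int f2::real)"
    using assms by auto
  have Y2: "(2 * of_int f1)^2 \<le> (2*Y)^2" "(2 * of_int f2)^2 \<le> (2*Y)^2"
    using assms F1(1) F2(1) by (intro power_mono; simp)+
  have a1: "(of_int f1 + of_int e1)^2 \<le> (2*Y)^2"
    using power_mono[OF F1(2), of 2] F1(3) Y2 by simp
  have a2: "(of_int f1 - of_int e1)^2 \<le> (2*Y)^2"
    using power_mono[OF F1(5), of 2] F1(4) Y2 by simp
  have b1: "(of_int f2 + of_int e2)^2 \<le> (2*Y)^2"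
    using power_mono[OF F2(2), of 2] F2(3) Y2 by simp
  have b2: "(of_int f2 - of_int e2)^2 \<le> (2*Y)^2"
    using power_mono[OF F2(5), of 2] F2(4) Y2 by simp
  have "s1 \<le> \<alpha>*(2*Y)^2 + (2*Y)^2" unfolding s1_def using a1 b2 assms(1)
    by (intro add_mono mult_left_mono) auto
  hence bs1: "s1 \<le> 4*(\<alpha>+1)*Y^2" by (simp add: algebra_simps power2_eq_square)
  have "s2 \<le> \<alpha>*(2*Y)^2 + (2*Y)^2" unfolding s2_def using a2 b1 assms(1)
    by (intro add_mono mult_left_mono) auto
  hence bs2: "s2 \<le> 4*(\<alpha>+1)*Y^2" by (simp add: algebra_simps power2_eq_square)
  show ?thesis
  proof (cases "g > 0")
    case True
    hence "s2 < s1" "s1 - s2 \<le> 4*Z" using diff assms(10) by auto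
    thus ?thesis using m1 m2 bs1 by blast
  next
    case False
    hence "s1 < s2" "s2 - s1 \<le> 4*Z" using diff assms(9,10) by auto
    thus ?thesis using m1 m2 bs2 by blast
  qed
qed

lemma pair_k:
  fixes \<eta> \<alpha> :: real and t p q :: int and k :: nat
  assumes eta: "\<eta> > 2" and tt: "of_int t = \<eta> + 1/\<eta>" and p: "p \<ge> 1" and q: "q \<ge> 1"
    and al: "\<alpha> = of_int p * \<eta> / of_int q \<or> \<alpha> = of_int p / (of_int q * \<eta>)" and k: "k \<ge> 1"
  shows "\<exists>s s'. s \<in> spec_set \<alpha> \<and> s' \<in> spec_set \<alpha> \<and> s < s' \<and>
     s' \<le> 4*(\<alpha>+1)*(of_int p * of_int q * (\<eta>+2))^2 * \<eta>^(2*k) \<and>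
     s' - s \<le> 4 * ((of_int p)^2 * of_int q / \<eta>^(2*k))"
proof -
  define X where "X = \<eta>^k"
  define xin where "xin = 1/X"
  define ein where "ein = 1/\<eta>"
  define D where "D = \<eta> - ein"
  define U0 where "U0 = lucU t k"
  define U1 where "U1 = lucU t (Suc k)"
  define V where "V = lucV t k"
  have eta0: "\<eta> \<noteq> 0" "\<eta> > 1" "\<eta> > 0" using eta by auto
  have X1: "X > 1" unfolding X_def using eta k by (intro one_less_power) auto
  have Xx: "X * xin = 1" using X1 by (simp add: xin_def)
  have ex: "\<eta> * ein = 1" using eta0 by (simp add: ein_def)
  have ein2: "ein < 1/2" using eta unfolding ein_def by (simp add: field_simps)
  have xin1: "0 < xin" "xin < 1" using X1 by (auto simp: xin_def field_simps)
  have D1: "D > 1" unfolding D_def using eta ein2 by linarith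
  have D0: "D \<noteq> 0" using D1 by simp
  have u0: "D * of_int U0 = X - xin"
    using lucU_closed[OF eta0(1) tt, of k] by (simp add: D_def ein_def X_def xin_def U0_def)
  have u1: "D * of_int U1 = \<eta>*X - ein*xin"
    using lucU_closed[OF eta0(1) tt, of "Suc k"] by (simp add: D_def ein_def X_def xin_def U1_def)
  have v: "of_int V = X + xin"
    using lucV_closed[OF eta0(1) tt, of k] by (simp add: X_def xin_def V_def)
  have Xsq: "X^2 = \<eta>^(2*k)" unfolding X_def by (simp add: power_mult[symmetric] mult.commute)
  have xsq: "xin^2 = 1/\<eta>^(2*k)" using Xsq by (simp add: xin_def power_divide)
  have r0pos: "of_int U0 > (0::real)"
  proof -
    have "D * of_int U0 > 0" using u0 xin1 X1 by simp
    thus ?thesis using D1 by (simp add: zero_less_mult_iff)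
  qed
  have r0le: "of_int U0 \<le> X"
  proof -
    have "D * of_int U0 \<le> X" using u0 xin1 by simp
    moreover have "of_int U0 \<le> D * of_int U0" using D1 r0pos by simp
    ultimately show ?thesis by linarith
  qed
  have r0lt: "of_int U0 < X" 
  proof -
    have "D * of_int U0 < X" using u0 xin1 by simp
    moreover have "of_int U0 \<le> D * of_int U0" using D1 r0pos by simp
    ultimately show ?thesis by linarith
  qed
  have r01: "of_int U0 < (of_int U1::real)"
  proof -
    have "ein * xin < 1 * xin" using ein2 xin1 by (intro mult_strict_right_mono) auto
    hence "ein * xin < xin" by simp
    moreover have "X < \<eta> * X" using X1 eta0 by simp
    ultimately have "D * of_int U0 < D * of_int U1" using u0 u1 by linarith
    thus ?thesis using D1 by simp
  qed
  have r1le: "of_int U1 \<le> \<eta> * X"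
  proof -
    have "0 < D * of_int U1" using r01 r0pos D1 by simp
    hence pos: "of_int U1 > (0::real)" using D1 by (simp add: zero_less_mult_iff)
    have "ein * xin \<ge> 0" using xin1 ein2 eta0 by (simp add: ein_def)
    hence "D * of_int U1 \<le> \<eta> * X" using u1 by linarith
    moreover have "of_int U1 \<le> D * of_int U1" using D1 pos by simp
    ultimately show ?thesis by linarith
  qed
  have rV: "X < of_int V" "of_int V \<le> 2 * X" using v xin1 X1 by auto
  have U0pos: "U0 > 0" using r0pos by simp
  have U01: "U0 < U1" using r01 by simp
  have U0V: "U0 < V" using r0lt rV by simp
  have pr: "of_int p \<ge> (1::real)" "of_int q \<ge> (1::real)" using p q by auto
  define B where "B = of_int p * of_int q * (\<eta>+2) * X"
  have Bsq: "B^2 = (of_int p * of_int q * (\<eta>+2))^2 * \<eta>^(2*k)"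
    unfolding B_def using Xsq by (simp add: power_mult_distrib)
  have pq0: "0 < of_int p * (of_int q::real)" using pr by simp
  have sumle: "of_int U1 + of_int U0 \<le> (\<eta>+2) * X" using r0le r1le X1 by (simp add: algebra_simps)
  have "0 \<le> \<eta> * X" using X1 eta0 by simp
  hence Vle: "of_int V \<le> (\<eta>+2) * X" using rV by (simp add: algebra_simps)
  have apos: "\<alpha> > 0" using al pr eta0 by auto
  have G: "4*(\<alpha>+1)*B^2 = 4*(\<alpha>+1)*(of_int p * of_int q * (\<eta>+2))^2 * \<eta>^(2*k)" using Bsq by simp
  from al show ?thesis
  proof
    assume A: "\<alpha> = of_int p * \<eta> / of_int q"
    define g where "g = \<alpha> * of_int (q*U0) * of_int (p*q*V) - of_int (p*(U1-U0)) * of_int (p*q*(U1+U0))"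
    have "g = (of_int p)^2 * of_int q * (\<eta> * of_int U0 * of_int V - (of_int U1)^2 + (of_int U0)^2)"
      unfolding g_def A using pr by (simp add: field_simps power2_eq_square)
    also have "\<eta> * of_int U0 * of_int V - (of_int U1)^2 + (of_int U0)^2 = -(xin^2)"
      by (rule idA[OF u0 u1 v Xx ex D_def D0])
    finally have g: "g = - ((of_int p)^2 * of_int q * xin^2)" by simp
    have gn: "g \<noteq> 0" using g pr xin1 by simp
    have ga: "\<bar>g\<bar> \<le> (of_int p)^2 * of_int q / \<eta>^(2*k)" using g pr xsq by simp
    have "\<exists>s s'. s \<in> spec_set \<alpha> \<and> s' \<in> spec_set \<alpha> \<and> s < s' \<and> s' \<le> 4*(\<alpha>+1)*B^2 \<and> s' - s \<le> 4*((of_int p)^2 * of_int q / \<eta>^(2*k))"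
    proof (rule pair_gen[OF apos _ _ _ _ _ _ g_def gn ga])
      show "0 < q*U0" using q U0pos by simp
      show "q*U0 < p*q*V" using p q U0V U0pos
        by (smt (verit, best) mult_le_cancel_right1 mult_less_cancel_left_pos mult.assoc)
      show "0 < p*(U1-U0)" using p U01 by simp
      show "p*(U1-U0) < p*q*(U1+U0)" using p q U0pos U01
        by (smt (verit, best) mult_le_cancel_left1 mult_less_cancel_left_pos mult.assoc mult_le_cancel_right1)
      show "of_int (p*q*V) \<le> B" unfolding B_def using mult_left_mono[OF Vle, of "of_int p * of_int q"] pq0 by (simp add: mult.assoc)
      show "of_int (p*q*(U1+U0)) \<le> B" unfolding B_def using mult_left_mono[OF sumle, of "of_int p * of_int q"] pq0 by (simp add: mult.assoc)
    qed
    from this[unfolded G] show ?thesis .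
  next
    assume A: "\<alpha> = of_int p / (of_int q * \<eta>)"
    define g where "g = \<alpha> * of_int (q*(U1-U0)) * of_int (p*q*(U1+U0)) - of_int (p*U0) * of_int (p*q*V)"
    have "g = (of_int p)^2 * of_int q * (ein * ((of_int U1)^2 - (of_int U0)^2) - of_int U0 * of_int V)"
      unfolding g_def A ein_def using pr eta0 by (simp add: field_simps power2_eq_square)
    also have "ein * ((of_int U1)^2 - (of_int U0)^2) - of_int U0 * of_int V = ein * xin^2"
      by (rule idB[OF u0 u1 v Xx ex D_def D0])
    finally have g: "g = (of_int p)^2 * of_int q * (ein * xin^2)" by simp
    have ein0: "0 < ein" "ein < 1" using ein2 eta0 by (auto simp: ein_def)
    have gn: "g \<noteq> 0" using g pr xin1 ein0 by simp
    have "\<bar>g\<bar> = (of_int p)^2 * of_int q * (ein * xin^2)" using g pr ein0 by simp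
    also have "\<dots> \<le> (of_int p)^2 * of_int q * xin^2"
    proof -
      have "ein * xin^2 \<le> 1 * xin^2" using ein0 by (intro mult_right_mono) auto
      thus ?thesis using pr by (intro mult_left_mono) auto
    qed
    finally have ga: "\<bar>g\<bar> \<le> (of_int p)^2 * of_int q / \<eta>^(2*k)" using xsq by simp
    have "\<exists>s s'. s \<in> spec_set \<alpha> \<and> s' \<in> spec_set \<alpha> \<and> s < s' \<and> s' \<le> 4*(\<alpha>+1)*B^2 \<and> s' - s \<le> 4*((of_int p)^2 * of_int q / \<eta>^(2*k))"
    proof (rule pair_gen[OF apos _ _ _ _ _ _ g_def gn ga])
      show "0 < q*(U1-U0)" using q U01 by simp
      show "q*(U1-U0) < p*q*(U1+U0)" using p q U0pos U01
        by (smt (verit, best) mult_le_cancel_left1 mult_less_cancel_left_pos mult.assoc mult_le_cancel_right1 mult.commute)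
      show "0 < p*U0" using p U0pos by simp
      show "p*U0 < p*q*V" using p q U0V U0pos
        by (smt (verit, best) mult_le_cancel_left1 mult_less_cancel_left_pos mult.assoc mult_le_cancel_right1 mult.commute)
      show "of_int (p*q*(U1+U0)) \<le> B" unfolding B_def using mult_left_mono[OF sumle, of "of_int p * of_int q"] pq0 by (simp add: mult.assoc)
      show "of_int (p*q*V) \<le> B" unfolding B_def using mult_left_mono[OF Vle, of "of_int p * of_int q"] pq0 by (simp add: mult.assoc)
    qed
    from this[unfolded G] show ?thesis .
  qed
qed

lemma final_arith:
  fixes \<delta> :: "nat \<Rightarrow> real" and F G \<rho> D0 :: real
  assumes rho: "\<rho> > 1" and F: "F > 0" and G: "G > 0" and d0: "\<And>N. N \<ge> 2 \<Longrightarrow> \<delta> N \<le> D0"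
    and dk: "\<And>k N. k \<ge> 1 \<Longrightarrow> F * \<rho>^k \<le> real N \<Longrightarrow> \<delta> N \<le> G / \<rho>^k"
  shows "\<exists>C>0. \<forall>N. N \<ge> 2 \<longrightarrow> \<delta> N \<le> C / real N"
proof (intro exI[of _ "(\<bar>D0\<bar> + G) * F * \<rho> + 1"] conjI allI impI)
  show "(\<bar>D0\<bar> + G) * F * \<rho> + 1 > 0" using rho F G by (simp add: add_pos_nonneg)
  fix N :: nat assume N: "N \<ge> 2"
  have Np: "real N > 0" using N by simp
  have Cge1: "\<bar>D0\<bar> * F * \<rho> \<le> (\<bar>D0\<bar> + G) * F * \<rho> + 1" using rho F G
    by (simp add: algebra_simps)
  have Cge2: "G * F * \<rho> \<le> (\<bar>D0\<bar> + G) * F * \<rho> + 1" using rho F G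
    by (simp add: algebra_simps)
  show "\<delta> N \<le> ((\<bar>D0\<bar> + G) * F * \<rho> + 1) / real N"
  proof (cases "real N < F * \<rho>")
    case True
    have "\<delta> N \<le> \<bar>D0\<bar>" using d0[OF N] by simp
    also have "\<dots> \<le> \<bar>D0\<bar> * F * \<rho> / real N"
    proof -
      have h: "\<bar>D0\<bar> * real N \<le> \<bar>D0\<bar> * (F * \<rho>)" using True by (intro mult_left_mono) auto
      thus ?thesis using Np by (simp add: pos_le_divide_eq mult.assoc)
    qed
    also have "\<dots> \<le> ((\<bar>D0\<bar> + G) * F * \<rho> + 1) / real N"
      using Cge1 Np by (simp add: divide_right_mono)
    finally show ?thesis .
  next
    case False
    obtain n where n: "real N / F < \<rho>^n" using real_arch_pow[OF rho] by blast
    have ex: "real N < F * \<rho>^n" using n F by (simp add: field_simps)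
    define k0 where "k0 = (LEAST k. real N < F * \<rho>^k)"
    have k0: "real N < F * \<rho>^k0" unfolding k0_def by (rule LeastI[of _ n]) (rule ex)
    have k00: "k0 \<noteq> 0"
    proof
      assume "k0 = 0" hence "real N < F" using k0 by simp
      moreover have "F \<le> F*\<rho>" using F rho by simp
      ultimately show False using False by linarith
    qed
    have k01: "k0 \<noteq> 1" using k0 False by auto
    define k where "k = k0 - 1"
    have kk: "k \<ge> 1" "k0 = Suc k" using k00 k01 by (auto simp: k_def)
    have "\<not> real N < F * \<rho>^k" unfolding k_def k0_def
      by (rule not_less_Least) (use kk in \<open>simp add: k_def k0_def\<close>)
    hence le: "F * \<rho>^k \<le> real N" by simp
    have "\<delta> N \<le> G / \<rho>^k" by (rule dk[OF kk(1) le])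
    also have "\<dots> = G * F * \<rho> / (F * \<rho>^Suc k)" using F rho by (simp add: field_simps)
    also have "\<dots> \<le> G * F * \<rho> / real N"
      using k0 kk Np F G rho by (intro divide_left_mono) auto
    also have "\<dots> \<le> ((\<bar>D0\<bar> + G) * F * \<rho> + 1) / real N"
      using Cge2 Np by (simp add: divide_right_mono)
    finally show ?thesis .
  qed
qed

lemma spec_pos: "\<alpha> > 0 \<Longrightarrow> s \<in> spec_set \<alpha> \<Longrightarrow> s > 0"
  unfolding spec_set_def by (auto intro!: add_pos_pos)

theorem mainTheorem9:
  fixes a x :: int and \<sigma> :: int and r :: rat and \<alpha> :: real
  assumes "a \<noteq> 0" and "even a"
    and "x \<noteq> 0"
    and "\<sigma> = 1 \<or> \<sigma> = -1"
    and "r \<noteq> 0"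
    and "(of_int x)^2 + 4 * of_int \<sigma> \<ge> (0::real)"
    and "\<alpha> = of_rat r * ((of_int x + sqrt ((of_int x)^2 + 4 * of_int \<sigma>)) / 2) powi a"
    and "\<alpha> > 0"
    and "\<alpha> \<notin> \<rat>"
  shows "\<exists>C > 0. \<forall>N :: nat. N \<ge> 2 \<longrightarrow> delta_min \<alpha> N \<le> C / real N"
proof -
  define Dd where "Dd = (of_int x)^2 + 4 * (of_int \<sigma> :: real)"
  define e where "e = (of_int x + sqrt Dd)/2"
  define f where "f = (of_int x - sqrt Dd)/2"
  have ef1: "e + f = of_int x" by (simp add: e_def f_def field_simps)
  have sq: "(sqrt Dd)^2 = Dd" using assms(6) Dd_def by simp
  have "e * f = ((of_int x)^2 - (sqrt Dd)^2)/4" by (simp add: e_def f_def power2_eq_square field_simps)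
  hence ef2: "e * f = - of_int \<sigma>" using sq by (simp add: Dd_def)
  have s2: "(of_int \<sigma> :: real)^2 = 1" using assms(4) by auto
  have e0: "e \<noteq> 0" "f \<noteq> 0" using ef2 assms(4) by auto
  define n where "n = nat \<bar>a\<bar>"
  have "even \<bar>a\<bar>" using assms(2) by simp
  hence "even n" unfolding n_def by (simp add: even_nat_iff)
  then obtain m where m: "n = 2*m" by blast
  have efn: "e^n * f^n = 1"
  proof -
    have "e^n * f^n = ((e*f)^2)^m" by (simp add: m power_mult power_mult_distrib)
    also have "\<dots> = 1" using ef2 s2 by simp
    finally show ?thesis .
  qed
  have epos: "e^n > 0" "f^n > 0" using e0 by (simp_all add: m power_mult)
  have fe: "f^n = 1/e^n" using efn epos e0 by (simp add: eq_divide_eq mult.commute)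
  define \<theta> where "\<theta> = e powi a"
  have W: "of_int (Wseq x \<sigma> n) = e^n + f^n" by (rule Wseq_closed0[OF ef1 ef2])
  have th: "\<theta> + 1/\<theta> = of_int (Wseq x \<sigma> n) \<and> \<theta> > 0"
  proof (cases "a \<ge> 0")
    case True
    hence t1: "\<theta> = e^n" by (simp add: \<theta>_def power_int_def n_def)
    have "1/\<theta> = f^n" using fe t1 by simp
    thus ?thesis using t1 W epos by simp
  next
    case False
    hence "\<theta> = inverse e ^ n" by (simp add: \<theta>_def power_int_def n_def)
    hence t1: "\<theta> = 1/e^n" by (simp add: power_inverse divide_inverse)
    hence t2: "\<theta> = f^n" using fe by simp
    have "1/\<theta> = e^n" using t1 epos by simp
    thus ?thesis using t2 W epos by simp
  qed
  define t where "t = Wseq x \<sigma> n"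
  have tt: "\<theta> + 1/\<theta> = of_int t" and thpos: "\<theta> > 0" using th by (auto simp: t_def)
  have aeq: "\<alpha> = of_rat r * \<theta>" using assms(7) by (simp add: \<theta>_def e_def Dd_def)
  have rpos: "of_rat r > (0::real)" using assms(8) aeq thpos by (simp add: zero_less_mult_iff)
  have thirr: "\<theta> \<notin> \<rat>"
  proof
    assume "\<theta> \<in> \<rat>"
    hence "of_rat r * \<theta> \<in> \<rat>" by (intro Rats_mult) auto
    thus False using assms(9) aeq by simp
  qed
  have th1: "\<theta> \<noteq> 1" using thirr by auto
  define \<eta> where "\<eta> = (if \<theta> > 1 then \<theta> else 1/\<theta>)"
  have eta1: "\<eta> > 1"
  proof (cases "\<theta> > 1")
    case True thus ?thesis by (simp add: \<eta>_def)
  next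
    case False
    hence "\<theta> < 1" using th1 by simp
    thus ?thesis using False thpos by (simp add: \<eta>_def field_simps)
  qed
  have etat: "of_int t = \<eta> + 1/\<eta>" using tt by (auto simp: \<eta>_def)
  have "\<eta> + 1/\<eta> - 2 = (\<eta> - 1)^2/\<eta>" using eta1 by (simp add: field_simps power2_eq_square)
  moreover have "(\<eta> - 1)^2/\<eta> > 0" using eta1 by simp
  ultimately have "of_int t > (2::real)" using etat by linarith
  hence "t \<ge> 3" by simp
  hence t3: "\<eta> + 1/\<eta> \<ge> 3" using etat by (metis of_int_le_iff of_int_numeral)
  have eta2: "\<eta> > 2"
  proof (rule ccontr)
    assume "\<not> \<eta> > 2"
    hence "(\<eta> - 1) * (\<eta> - 2) \<le> 0" using eta1 by (intro mult_nonneg_nonpos) auto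
    moreover have "\<eta> * (\<eta> + 1/\<eta>) \<ge> \<eta> * 3" using t3 eta1 by (intro mult_left_mono) auto
    moreover have "\<eta> * (\<eta> + 1/\<eta>) = \<eta>*\<eta> + 1" using eta1 by (simp add: field_simps)
    moreover have "(\<eta> - 1) * (\<eta> - 2) = \<eta>*\<eta> - 3*\<eta> + 2" by (simp add: algebra_simps)
    ultimately show False by linarith
  qed
  obtain p q where pq: "quotient_of r = (p, q)" by (cases "quotient_of r") auto
  have q0: "q > 0" by (rule quotient_of_denom_pos[OF pq])
  have rpq: "(of_rat r :: real) = of_int p / of_int q"
    using quotient_of_div[OF pq] by (simp add: of_rat_divide)
  have p0: "p > 0"
  proof -
    have "(of_int p :: real) / of_int q > 0" using rpos rpq by simp
    thus ?thesis using q0 by (simp add: zero_less_divide_iff)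
  qed
  have p1: "p \<ge> 1" and q1: "q \<ge> 1" using p0 q0 by auto
  have alform: "\<alpha> = of_int p * \<eta> / of_int q \<or> \<alpha> = of_int p / (of_int q * \<eta>)"
  proof (cases "\<theta> > 1")
    case True thus ?thesis using aeq rpq by (simp add: \<eta>_def)
  next
    case False thus ?thesis using aeq rpq thpos by (simp add: \<eta>_def field_simps)
  qed
  define K where "K = 4*(\<alpha>+1)*(of_int p * of_int q * (\<eta>+2))^2"
  define G where "G = 4 * ((of_int p)^2 * (of_int q::real))"
  define \<rho> where "\<rho> = \<eta>^2"
  define F where "F = K / sqrt \<alpha> + 1"
  have K0: "K \<ge> 0" unfolding K_def using assms(8) by simp
  have sa: "sqrt \<alpha> > 0" using assms(8) by simp
  have F0: "F > 0" unfolding F_def using K0 sa by (simp add: add_nonneg_pos)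
  have G0: "G > 0" unfolding G_def using p0 q0 by simp
  have rho1: "\<rho> > 1" unfolding \<rho>_def using eta1 by (simp add: one_less_power)
  have pw: "\<eta>^(2*k) = \<rho>^k" for k by (simp add: \<rho>_def power_mult)
  show ?thesis
  proof (rule final_arith[OF rho1 F0 G0])
    fix N :: nat assume "N \<ge> 2"
    thus "delta_min \<alpha> N \<le> delta_min \<alpha> 2" by (rule delta_mono2)
  next
    fix k N :: nat assume k: "k \<ge> 1" and FN: "F * \<rho>^k \<le> real N"
    obtain s s' where ss: "s \<in> spec_set \<alpha>" "s' \<in> spec_set \<alpha>" "s < s'"
      "s' \<le> K * \<eta>^(2*k)" "s' - s \<le> 4 * ((of_int p)^2 * of_int q / \<eta>^(2*k))"
      using pair_k[OF eta2 etat p1 q1 alform k] unfolding K_def by blast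
    have s'0: "s' > 0" by (rule spec_pos[OF assms(8) ss(2)])
    have "real (cnt \<alpha> s') \<le> s' / sqrt \<alpha>" unfolding cnt_def by (rule below_card[OF assms(8) s'0])
    also have "\<dots> \<le> K * \<rho>^k / sqrt \<alpha>" using ss(4) sa pw by (simp add: divide_right_mono)
    also have "\<dots> < F * \<rho>^k" unfolding F_def using rho1 by (simp add: algebra_simps)
    finally have "real (cnt \<alpha> s') < real N" using FN by linarith
    hence "cnt \<alpha> s' < N" by simp
    hence "delta_min \<alpha> N \<le> s' - s" by (rule delta_le[OF assms(8) ss(1,2,3)])
    also have "\<dots> \<le> G / \<rho>^k" using ss(5) pw by (simp add: G_def)
    finally show "delta_min \<alpha> N \<le> G / \<rho>^k" .
  qed
qed

end
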